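(* Let $d\geq1$, $\lambda>0$, $\beta\geq 0$. Suppose $(T_0,Y_0)\in L^\infty_x(\mathbb{R}^d)\times L^\infty_x(\mathbb{R}^d)$ with $Y_0\geq 0$, and let $(T,Y)\in C^0_tL^\infty_x\times C^0_tL^\infty_x$ be a corresponding mild solution of the Cauchy problem below. Then for all $t$ at which the solution is defined, $$\|T(\cdot,t)\|_{L^\infty_x}\leq e^{-\lambda t}\|T_0\|_{L^\infty_x}+\lambda^{-1}\|Y_0\|_{L^\infty_x}.$$
   Context: The reaction rate is $r(T)=e^{-1/T}$ for $T>0$ and $r(T)=0$ for $T\leq 0$. The Cauchy problem is $T_t=(\Delta-\lambda)T+Yr(T)$, $Y_t=-\beta Y r(T)$, $T|_{t=0}=T_0$, $Y|_{t=0}=Y_0$ on $\mathbb{R}^d$. A pair $(T,Y)\in C^0_tL^\infty_x\times C^0_tL^\infty_x$ (continuous curves from the time interval into $L^\infty_x$) is a mild solution if for all $t$ in the time interval $$T(x,t)=e^{-\lambda t}e^{t\Delta}T_0+\int_0^t e^{-\lambda(t-\tau)}e^{(t-\tau)\Delta}\big(Y(\cdot,\tau)r(T(\cdot,\tau))\big)\,d\tau,\qquad Y(x,t)=Y_0(x)\exp\Big(-\beta\int_0^t r(T(x,\sigma))\,d\sigma\Big),$$ where $e^{t\Delta}$ is the heat semigroup on $\mathbb{R}^d$. *)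

theory Defs
  imports "HOL-Analysis.Analysis" "HOL-Probability.Essential_Supremum"
begin

text \<open>Space variable x ranges over an arbitrary Euclidean space 'a (so d = DIM('a) \<ge> 1);
  time is real. Functions of (x,t) are curried as T x t.\<close>

definition linf_norm :: "('a::euclidean_space \<Rightarrow> real) \<Rightarrow> ereal" where
  "linf_norm f = esssup lebesgue (\<lambda>x. ereal \<bar>f x\<bar>)"

definition in_Linf :: "('a::euclidean_space \<Rightarrow> real) \<Rightarrow> bool" where
  "in_Linf f \<longleftrightarrow> f \<in> borel_measurable lebesgue \<and> linf_norm f < \<infinity>"

definition C0_Linf :: "real set \<Rightarrow> ('a::euclidean_space \<Rightarrow> real \<Rightarrow> real) \<Rightarrow> bool" where
  "C0_Linf J T \<longleftrightarrow> (\<forall>t\<in>J. in_Linf (\<lambda>x. T x t)) \<and>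
     (\<forall>t\<in>J. ((\<lambda>s. linf_norm (\<lambda>x. T x s - T x t)) \<longlongrightarrow> 0) (at t within J))"

definition heat_kernel :: "real \<Rightarrow> 'a::euclidean_space \<Rightarrow> real" where
  "heat_kernel t z = (4 * pi * t) powr (- real DIM('a) / 2) * exp (- (norm z)\<^sup>2 / (4 * t))"

definition heat_sg :: "real \<Rightarrow> ('a::euclidean_space \<Rightarrow> real) \<Rightarrow> 'a \<Rightarrow> real" where
  "heat_sg t f x = (if t \<le> 0 then f x else (LINT y|lebesgue. heat_kernel t (x - y) * f y))"

definition rate :: "real \<Rightarrow> real" where
  "rate T = (if T > 0 then exp (- 1 / T) else 0)"

definition mild_solution ::
  "real \<Rightarrow> real \<Rightarrow> ('a::euclidean_space \<Rightarrow> real) \<Rightarrow> ('a \<Rightarrow> real) \<Rightarrow> real set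
    \<Rightarrow> ('a \<Rightarrow> real \<Rightarrow> real) \<Rightarrow> ('a \<Rightarrow> real \<Rightarrow> real) \<Rightarrow> bool" where
  "mild_solution lam \<beta> T0 Y0 J T Y \<longleftrightarrow>
     C0_Linf J T \<and> C0_Linf J Y \<and>
     (\<forall>t\<in>J. AE x in lebesgue.
        T x t = exp (- lam * t) * heat_sg t T0 x
          + (LBINT \<tau>=0..t. exp (- lam * (t - \<tau>)) * heat_sg (t - \<tau>) (\<lambda>y. Y y \<tau> * rate (T y \<tau>)) x)) \<and>
     (\<forall>t\<in>J. AE x in lebesgue.
        Y x t = Y0 x * exp (- \<beta> * (LBINT \<sigma>=0..t. rate (T x \<sigma>))))"

end

theory Submission
  imports Defs "HOL-Probability.Distributions"
begin

lemma nn_normal: "0 < \<sigma> \<Longrightarrow> (\<integral>\<^sup>+x. ennreal (normal_density \<mu> \<sigma> x) \<partial>lborel) = 1"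
  by (simp add: nn_integral_eq_integral)

lemma heat_kernel_prod:
  fixes x y :: "'a::euclidean_space"
  assumes s: "s > 0"
  shows "heat_kernel s (x - y) = (\<Prod>b\<in>Basis. normal_density (x \<bullet> b) (sqrt (2 * s)) (y \<bullet> b))"
proof -
  have n: "(norm (x - y))\<^sup>2 = (\<Sum>b\<in>Basis. ((y \<bullet> b) - (x \<bullet> b))\<^sup>2)"
    unfolding power2_norm_eq_inner
    by (subst euclidean_inner) (simp add: inner_diff_left power2_eq_square algebra_simps)
  have e: "exp (- (norm (x - y))\<^sup>2 / (4 * s)) = (\<Prod>b\<in>Basis. exp (-((y \<bullet> b) - (x \<bullet> b))\<^sup>2 / (2 * (sqrt (2 * s))\<^sup>2)))"
    using s by (simp add: n exp_sum[symmetric] sum_divide_distrib sum_negf)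
  have c: "(4 * pi * s) powr (- real DIM('a) / 2) = (\<Prod>b\<in>(Basis::'a set). 1 / sqrt (2 * pi * (sqrt (2 * s))\<^sup>2))"
  proof -
    have "(4 * pi * s) powr (- real DIM('a) / 2) = inverse (((4 * pi * s) powr (1/2)) ^ DIM('a))"
      using s by (simp add: powr_minus powr_realpow[symmetric] powr_powr divide_simps)
    also have "\<dots> = (1 / sqrt (4 * pi * s)) ^ DIM('a)"
      using s by (simp add: powr_half_sqrt power_one_over inverse_eq_divide)
    finally show ?thesis using s by (simp add: mult.assoc)
  qed
  show ?thesis unfolding heat_kernel_def normal_density_def prod.distrib c e by simp
qed

lemma heat_kernel_nonneg: "0 \<le> heat_kernel s z"
  unfolding heat_kernel_def by simp

lemma heat_kernel_borel[measurable]: "(\<lambda>z. heat_kernel s z) \<in> borel_measurable borel"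
  unfolding heat_kernel_def by measurable

lemma nn_heat:
  fixes x :: "'a::euclidean_space"
  assumes s: "s > 0"
  shows "(\<integral>\<^sup>+y. ennreal (heat_kernel s (x - y)) \<partial>lebesgue) = 1"
proof -
  have "(\<integral>\<^sup>+y. ennreal (heat_kernel s (x - y)) \<partial>lebesgue)
      = (\<integral>\<^sup>+y. ennreal (heat_kernel s (x - y)) \<partial>lborel)"
    by (rule nn_integral_completion)
  also have "\<dots> = (\<integral>\<^sup>+y. (\<Prod>b\<in>Basis. ennreal (normal_density (x \<bullet> b) (sqrt (2 * s)) (y \<bullet> b))) \<partial>lborel)"
    using s by (simp add: heat_kernel_prod prod_ennreal)
  also have "\<dots> = (\<Prod>b\<in>(Basis::'a set). (\<integral>\<^sup>+u. ennreal (normal_density (x \<bullet> b) (sqrt (2 * s)) u) \<partial>lborel))"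
    by (rule nn_integral_lborel_prod) auto
  also have "\<dots> = 1"
    using s by (simp add: nn_normal)
  finally show ?thesis .
qed

lemma heat_sg_bound:
  fixes f :: "'a::euclidean_space \<Rightarrow> real"
  assumes s: "s > 0" and M: "0 \<le> M" and ae: "AE y in lebesgue. \<bar>f y\<bar> \<le> M"
  shows "\<bar>heat_sg s f x\<bar> \<le> M"
proof (cases "integrable lebesgue (\<lambda>y. heat_kernel s (x - y) * f y)")
  case True
  have "ennreal \<bar>heat_sg s f x\<bar> = ennreal (norm (LINT y|lebesgue. heat_kernel s (x - y) * f y))"
    using s by (simp add: heat_sg_def)
  also have "\<dots> \<le> (\<integral>\<^sup>+y. norm (heat_kernel s (x - y) * f y) \<partial>lebesgue)"
    by (rule integral_norm_bound_ennreal[OF True])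
  also have "\<dots> \<le> (\<integral>\<^sup>+y. ennreal (heat_kernel s (x - y)) * ennreal M \<partial>lebesgue)"
  proof (rule nn_integral_mono_AE)
    show "AE y in lebesgue. ennreal (norm (heat_kernel s (x - y) * f y)) \<le> ennreal (heat_kernel s (x - y)) * ennreal M"
      using ae
    proof eventually_elim
      case (elim y)
      have "norm (heat_kernel s (x - y) * f y) = heat_kernel s (x - y) * \<bar>f y\<bar>"
        by (simp add: abs_mult heat_kernel_nonneg)
      also have "\<dots> \<le> heat_kernel s (x - y) * M"
        using elim by (simp add: mult_left_mono heat_kernel_nonneg)
      finally show ?case
        by (simp add: ennreal_mult'[symmetric] M heat_kernel_nonneg)
    qed
  qed
  also have "\<dots> = (\<integral>\<^sup>+y. ennreal (heat_kernel s (x - y)) \<partial>lebesgue) * ennreal M"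
  proof (rule nn_integral_multc)
    have "(\<lambda>y. heat_kernel s (x - y)) \<in> borel_measurable lborel" by measurable
    then have "(\<lambda>y. heat_kernel s (x - y)) \<in> borel_measurable lebesgue"
      by (rule measurable_completion)
    then show "(\<lambda>y. ennreal (heat_kernel s (x - y))) \<in> borel_measurable lebesgue"
      by measurable
  qed
  also have "\<dots> = ennreal M" using s by (simp add: nn_heat)
  finally show ?thesis using M by simp
next
  case False
  then show ?thesis using s M by (simp add: heat_sg_def not_integrable_integral_eq)
qed

lemma nn_exp_int:
  fixes lam t :: real
  assumes lam: "lam > 0" and t: "t \<ge> 0"
  shows "(\<integral>\<^sup>+\<tau>. ennreal (if \<tau> \<in> {0..t} then exp (- lam * (t - \<tau>)) else 0) \<partial>lborel)
     = ennreal (1 / lam - exp (- lam * t) / lam)"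
proof (rule nn_integral_has_integral_lborel)
  show "(\<lambda>\<tau>. if \<tau> \<in> {0..t} then exp (- lam * (t - \<tau>)) else 0) \<in> borel_measurable borel"
    by measurable
  show "\<And>x. 0 \<le> (if x \<in> {0..t} then exp (- lam * (t - x)) else 0)" by simp
  have "((\<lambda>\<tau>. exp (- lam * (t - \<tau>))) has_integral
        (exp (- lam * (t - t)) / lam - exp (- lam * (t - 0)) / lam)) {0..t}"
  proof (rule fundamental_theorem_of_calculus)
    show "0 \<le> t" by fact
    fix x assume "x \<in> {0..t}"
    have "((\<lambda>\<tau>. exp (- lam * (t - \<tau>)) / lam) has_real_derivative (exp (- lam * (t - x)) * lam / lam)) (at x within {0..t})"
      by (auto intro!: derivative_eq_intros)
    then show "((\<lambda>\<tau>. exp (- lam * (t - \<tau>)) / lam) has_vector_derivative exp (- lam * (t - x))) (at x within {0..t})"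
      using lam by (simp add: has_real_derivative_iff_has_vector_derivative)
  qed
  then have "((\<lambda>\<tau>. exp (- lam * (t - \<tau>))) has_integral (1 / lam - exp (- lam * t) / lam)) {0..t}"
    by simp
  then show "((\<lambda>\<tau>. if \<tau> \<in> {0..t} then exp (- lam * (t - \<tau>)) else 0) has_integral (1 / lam - exp (- lam * t) / lam)) UNIV"
    by (simp only: has_integral_restrict_UNIV)
qed

lemma time_bound:
  fixes g :: "real \<Rightarrow> real"
  assumes lam: "lam > 0" and t: "t \<ge> 0" and N: "N \<ge> 0"
    and b: "\<And>\<tau>. 0 < \<tau> \<Longrightarrow> \<tau> < t \<Longrightarrow> \<bar>g \<tau>\<bar> \<le> exp (- lam * (t - \<tau>)) * N"
  shows "\<bar>LBINT \<tau>=0..t. g \<tau>\<bar> \<le> N / lam"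
proof -
  have ei: "einterval 0 (ereal t) = {0<..<t}" by (auto simp: einterval_def)
  have eq: "(LBINT \<tau>=0..t. g \<tau>) = integral\<^sup>L lborel (\<lambda>\<tau>. indicator {0<..<t} \<tau> *\<^sub>R g \<tau>)"
    using t by (simp add: interval_lebesgue_integral_def set_lebesgue_integral_def ei)
  show ?thesis
  proof (cases "integrable lborel (\<lambda>\<tau>. indicator {0<..<t} \<tau> *\<^sub>R g \<tau>)")
    case True
    have "ennreal \<bar>LBINT \<tau>=0..t. g \<tau>\<bar> = ennreal (norm (integral\<^sup>L lborel (\<lambda>\<tau>. indicator {0<..<t} \<tau> *\<^sub>R g \<tau>)))"
      by (simp add: eq)
    also have "\<dots> \<le> (\<integral>\<^sup>+\<tau>. norm (indicator {0<..<t} \<tau> *\<^sub>R g \<tau>) \<partial>lborel)"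
      by (rule integral_norm_bound_ennreal[OF True])
    also have "\<dots> \<le> (\<integral>\<^sup>+\<tau>. ennreal (if \<tau> \<in> {0..t} then exp (- lam * (t - \<tau>)) else 0) * ennreal N \<partial>lborel)"
    proof (rule nn_integral_mono)
      fix \<tau>
      show "ennreal (norm (indicator {0<..<t} \<tau> *\<^sub>R g \<tau>)) \<le> ennreal (if \<tau> \<in> {0..t} then exp (- lam * (t - \<tau>)) else 0) * ennreal N"
      proof (cases "0 < \<tau> \<and> \<tau> < t")
        case True
        then show ?thesis using b[of \<tau>] N by (simp add: ennreal_mult'[symmetric])
      next
        case False
        then have "indicator {0<..<t} \<tau> = (0::real)" by (simp add: indicator_def)
        then show ?thesis by simp
      qed
    qed
    also have "\<dots> = (\<integral>\<^sup>+\<tau>. ennreal (if \<tau> \<in> {0..t} then exp (- lam * (t - \<tau>)) else 0) \<partial>lborel) * ennreal N"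
      by (rule nn_integral_multc) measurable
    also have "\<dots> = ennreal ((1 / lam - exp (- lam * t) / lam) * N)"
      using lam t N by (simp only: nn_exp_int[OF lam t] ennreal_mult''[OF N, symmetric])
    also have "\<dots> \<le> ennreal (N / lam)"
      using lam N by (intro ennreal_leI) (simp add: field_simps)
    finally show ?thesis using lam N by simp
  next
    case False
    then show ?thesis using lam N by (simp add: eq not_integrable_integral_eq)
  qed
qed

lemma leb_nonzero: "emeasure (lebesgue :: 'a::euclidean_space measure) (space lebesgue) \<noteq> 0"
proof
  assume h: "emeasure (lebesgue :: 'a measure) (space lebesgue) = 0"
  have "emeasure (lebesgue :: 'a measure) (cbox 0 One) \<le> emeasure (lebesgue :: 'a measure) (space lebesgue)"
    by (rule emeasure_space)
  moreover have "emeasure (lebesgue :: 'a measure) (cbox 0 One) = 1"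
    by (simp add: emeasure_lborel_cbox_eq inner_Basis)
  ultimately show False using h by simp
qed

lemma linf_fin:
  fixes f :: "'a::euclidean_space \<Rightarrow> real"
  assumes "in_Linf f"
  obtains M where "M \<ge> 0" "linf_norm f = ereal M" "AE x in lebesgue. \<bar>f x\<bar> \<le> M"
proof -
  have fm: "f \<in> borel_measurable lebesgue" and fin: "linf_norm f < \<infinity>"
    using assms by (auto simp: in_Linf_def)
  have m: "(\<lambda>x. ereal \<bar>f x\<bar>) \<in> borel_measurable lebesgue" using fm by measurable
  have "esssup lebesgue (\<lambda>x::'a. 0::ereal) \<le> linf_norm f"
    unfolding linf_norm_def by (rule esssup_mono) auto
  moreover have "esssup (lebesgue::'a measure) (\<lambda>x::'a. 0::ereal) = 0"
    by (rule esssup_const[OF leb_nonzero])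
  ultimately have nn: "0 \<le> linf_norm f" by simp
  define M where "M = real_of_ereal (linf_norm f)"
  have e: "linf_norm f = ereal M" using nn fin unfolding M_def by (cases "linf_norm f") auto
  have "AE x in lebesgue. ereal \<bar>f x\<bar> \<le> linf_norm f"
    unfolding linf_norm_def by (rule esssup_AE)
  then have "AE x in lebesgue. \<bar>f x\<bar> \<le> M" by (simp add: e)
  moreover have "M \<ge> 0" using nn e by simp
  ultimately show ?thesis using that e by blast
qed

lemma linf_le:
  fixes g :: "'a::euclidean_space \<Rightarrow> real"
  assumes "g \<in> borel_measurable lebesgue" "AE x in lebesgue. \<bar>g x\<bar> \<le> B"
  shows "linf_norm g \<le> ereal B"
  unfolding linf_norm_def using assms by (intro esssup_I) auto

lemma LBINT_nonneg:
  fixes f :: "real \<Rightarrow> real" and t :: real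
  assumes "0 \<le> t" "\<And>x. 0 \<le> f x"
  shows "0 \<le> (LBINT x=0..t. f x)"
proof -
  have ei: "einterval 0 (ereal t) = {0<..<t}" by (auto simp: einterval_def)
  show ?thesis using assms
    by (simp add: interval_lebesgue_integral_def set_lebesgue_integral_def ei)
qed

lemma rate_bounds: "0 \<le> rate T" "rate T \<le> 1"
  unfolding rate_def by auto

theorem proposition2p5:
  fixes T0 Y0 :: "'a::euclidean_space \<Rightarrow> real"
    and T Y :: "'a \<Rightarrow> real \<Rightarrow> real"
    and J :: "real set" and lam \<beta> t :: real
  assumes "lam > 0" and "\<beta> \<ge> 0"
    and "in_Linf T0" and "in_Linf Y0"
    and "AE x in lebesgue. Y0 x \<ge> 0"
    and "is_interval J" and "0 \<in> J" and "J \<subseteq> {0..}"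
    and "mild_solution lam \<beta> T0 Y0 J T Y"
    and "t \<in> J"
  shows "linf_norm (\<lambda>x. T x t)
           \<le> ereal (exp (- lam * t)) * linf_norm T0 + ereal (1 / lam) * linf_norm Y0"
proof -
  note lam = assms(1)
  have t0: "0 \<le> t" using assms(8,10) by auto
  obtain M0 where M0: "M0 \<ge> 0" "linf_norm T0 = ereal M0" "AE x in lebesgue. \<bar>T0 x\<bar> \<le> M0"
    using linf_fin[OF assms(3)] by blast
  obtain N0 where N0: "N0 \<ge> 0" "linf_norm Y0 = ereal N0" "AE x in lebesgue. \<bar>Y0 x\<bar> \<le> N0"
    using linf_fin[OF assms(4)] by blast
  have ms: "C0_Linf J T"
    "\<forall>t\<in>J. AE x in lebesgue.
        T x t = exp (- lam * t) * heat_sg t T0 x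
          + (LBINT \<tau>=0..t. exp (- lam * (t - \<tau>)) * heat_sg (t - \<tau>) (\<lambda>y. Y y \<tau> * rate (T y \<tau>)) x)"
    "\<forall>t\<in>J. AE x in lebesgue.
        Y x t = Y0 x * exp (- \<beta> * (LBINT \<sigma>=0..t. rate (T x \<sigma>)))"
    using assms(9) unfolding mild_solution_def by auto
  have Fb: "AE y in lebesgue. \<bar>Y y \<tau> * rate (T y \<tau>)\<bar> \<le> N0" if "\<tau> \<in> J" for \<tau>
  proof -
    have \<tau>0: "0 \<le> \<tau>" using that assms(8) by auto
    show ?thesis using ms(3)[rule_format, OF that] N0(3)
    proof eventually_elim
      case (elim y)
      have I: "0 \<le> (LBINT \<sigma>=0..\<tau>. rate (T y \<sigma>))"
        by (rule LBINT_nonneg[OF \<tau>0]) (simp add: rate_bounds)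
      have ex: "exp (- \<beta> * (LBINT \<sigma>=0..\<tau>. rate (T y \<sigma>))) \<le> 1"
        using I assms(2) by (simp add: mult_nonneg_nonneg)
      have "\<bar>Y y \<tau> * rate (T y \<tau>)\<bar> \<le> \<bar>Y y \<tau>\<bar>"
        using rate_bounds[of "T y \<tau>"] by (simp add: abs_mult mult_left_le)
      also have "\<dots> = \<bar>Y0 y\<bar> * exp (- \<beta> * (LBINT \<sigma>=0..\<tau>. rate (T y \<sigma>)))"
        using elim(1) by (simp add: abs_mult)
      also have "\<dots> \<le> \<bar>Y0 y\<bar>"
        using ex by (simp add: mult_left_le)
      finally show ?case using elim(2) by simp
    qed
  qed
  have second: "\<bar>LBINT \<tau>=0..t. exp (- lam * (t - \<tau>)) * heat_sg (t - \<tau>) (\<lambda>y. Y y \<tau> * rate (T y \<tau>)) x\<bar> \<le> N0 / lam" for x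
  proof (rule time_bound[OF lam t0 N0(1)])
    fix \<tau> assume \<tau>: "0 < \<tau>" "\<tau> < t"
    have "\<tau> \<in> J" using assms(6,7,10) \<tau> unfolding is_interval_1 by fastforce
    then have "\<bar>heat_sg (t - \<tau>) (\<lambda>y. Y y \<tau> * rate (T y \<tau>)) x\<bar> \<le> N0"
      using \<tau> by (intro heat_sg_bound Fb N0(1)) auto
    then show "\<bar>exp (- lam * (t - \<tau>)) * heat_sg (t - \<tau>) (\<lambda>y. Y y \<tau> * rate (T y \<tau>)) x\<bar> \<le> exp (- lam * (t - \<tau>)) * N0"
      by (simp add: abs_mult)
  qed
  have first: "AE x in lebesgue. \<bar>heat_sg t T0 x\<bar> \<le> M0"
  proof (cases "t = 0")
    case True
    then show ?thesis using M0(3) by (simp add: heat_sg_def)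
  next
    case False
    then have "t > 0" using t0 by simp
    then show ?thesis using heat_sg_bound[OF _ M0(1) M0(3)] by simp
  qed
  have "AE x in lebesgue. \<bar>T x t\<bar> \<le> exp (- lam * t) * M0 + N0 / lam"
    using ms(2)[rule_format, OF assms(10)] first
  proof eventually_elim
    case (elim x)
    let ?L = "LBINT \<tau>=0..t. exp (- lam * (t - \<tau>)) * heat_sg (t - \<tau>) (\<lambda>y. Y y \<tau> * rate (T y \<tau>)) x"
    have "\<bar>T x t\<bar> \<le> \<bar>exp (- lam * t) * heat_sg t T0 x\<bar> + \<bar>?L\<bar>"
      unfolding elim(1) by (rule abs_triangle_ineq)
    also have "\<dots> \<le> exp (- lam * t) * \<bar>heat_sg t T0 x\<bar> + N0 / lam"
      using second[of x] by (simp add: abs_mult)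
    finally have "\<bar>T x t\<bar> \<le> exp (- lam * t) * \<bar>heat_sg t T0 x\<bar> + N0 / lam" .
    also have "\<dots> \<le> exp (- lam * t) * M0 + N0 / lam"
      using elim(2) by simp
    finally show ?case .
  qed
  moreover have "(\<lambda>x. T x t) \<in> borel_measurable lebesgue"
    using ms(1) assms(10) unfolding C0_Linf_def in_Linf_def by auto
  ultimately have "linf_norm (\<lambda>x. T x t) \<le> ereal (exp (- lam * t) * M0 + N0 / lam)"
    by (intro linf_le) auto
  also have "\<dots> = ereal (exp (- lam * t)) * linf_norm T0 + ereal (1 / lam) * linf_norm Y0"
    using M0(2) N0(2) by simp
  finally show ?thesis .
qed

end
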